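(* Let $p,n\in\mathbb N$ with $p\ge n\ge 5$ and $n-1\nmid p$. Then $$\frac{(n-2)p}{2}-\frac{(n-1)^2}{8}\le ex(p;T_n^2)\le \frac{(n-2)(p-1)}{2}.$$
   Context: All graphs are finite and simple; a graph "contains" $H$ if it has a subgraph isomorphic to $H$. For a graph $L$ and $p\in\mathbb N$, $ex(p;L)$ is the maximum number of edges in a graph on $p$ vertices containing no copy of $L$. For $n\ge 5$, $T_n^2$ is the tree with vertex set $\{v_0,\ldots,v_{n-1}\}$ and edge set $\{v_0v_1,\ldots,v_0v_{n-3},\,v_{n-3}v_{n-2},\,v_{n-3}v_{n-1}\}$. *)

theory Defs
  imports Complex_Main
begin

definition simple_graph :: "'a set \<Rightarrow> 'a set set \<Rightarrow> bool" where
  "simple_graph V E \<longleftrightarrow> finite V \<and> (\<forall>e\<in>E. e \<subseteq> V \<and> card e = 2)"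

definition contains_graph :: "'a set \<Rightarrow> 'a set set \<Rightarrow> 'b set \<Rightarrow> 'b set set \<Rightarrow> bool" where
  "contains_graph V E VL EL \<longleftrightarrow>
     (\<exists>f. inj_on f VL \<and> f ` VL \<subseteq> V \<and> (\<forall>e\<in>EL. f ` e \<in> E))"

definition ex :: "nat \<Rightarrow> 'b set \<Rightarrow> 'b set set \<Rightarrow> nat" where
  "ex p VL EL = Max {card E | E. simple_graph {0..<p} E \<and> \<not> contains_graph {0..<p} E VL EL}"

definition T2_vertices :: "nat \<Rightarrow> nat set" where
  "T2_vertices n = {0..<n}"

definition T2_edges :: "nat \<Rightarrow> nat set set" where
  "T2_edges n = {{0, i} | i. 1 \<le> i \<and> i \<le> n - 3} \<union> {{n - 3, n - 2}, {n - 3, n - 1}}"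

end

theory Submission
  imports Defs
begin

definition nb :: "nat set \<Rightarrow> nat set set \<Rightarrow> nat \<Rightarrow> nat set" where
  "nb V E v = {u\<in>V. {v,u} \<in> E}"

lemma nb_fin: "finite V \<Longrightarrow> finite (nb V E v)"
  unfolding nb_def by auto

lemma edge_ne: "simple_graph V E \<Longrightarrow> {a,b} \<in> E \<Longrightarrow> a \<noteq> b"
proof
  assume "simple_graph V E" "{a,b} \<in> E" "a = b"
  then have "card {a,b} = 2" unfolding simple_graph_def by blast
  with \<open>a = b\<close> show False by simp
qed

lemma edge_V: "simple_graph V E \<Longrightarrow> {a,b} \<in> E \<Longrightarrow> a \<in> V \<and> b \<in> V"
  unfolding simple_graph_def by blast

lemma inj5:
  assumes "\<And>i. i\<in>A \<Longrightarrow> (i = i0 \<and> f i = a) \<or> (i = i1 \<and> f i = b) \<or> (i = i2 \<and> f i = x) \<or> (i=i3 \<and> f i = y) \<or> (i\<in>I \<and> f i \<in> L)"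
    and "inj_on f I" and "distinct [i0,i1,i2,i3]" and "distinct [a,b,x,y]" and "a\<notin>L" "b\<notin>L" "x\<notin>L" "y\<notin>L"
  shows "inj_on f A"
proof (rule inj_onI)
  fix i j assume i: "i \<in> A" and j: "j \<in> A" and e: "f i = f j"
  from assms(1)[OF i] assms(1)[OF j] show "i = j"
    apply (elim disjE conjE)
    apply (insert e assms(2-))
    apply (simp_all add: inj_on_def)
    done
qed

lemma noT:
  assumes n5: "n \<ge> 5" and sg: "simple_graph V E"
    and nc: "\<not> contains_graph V E (T2_vertices n) (T2_edges n)"
    and ab: "{a,b} \<in> E" and bx: "{b,x}\<in>E" and bY: "{b,y}\<in>E" and xy: "x\<noteq>y" "x\<noteq>a" "y\<noteq>a"
    and L: "L \<subseteq> nb V E a" "card L = n-4" "b\<notin>L" "x\<notin>L" "y\<notin>L"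
  shows False
proof -
  have fL: "finite L" using L(2) n5 card.infinite by fastforce
  obtain g where g: "bij_betw g {1..n-4} L" using ex_bij_betw_nat_finite_1[OF fL] L(2) by auto
  define f where "f i = (if i=0 then a else if i = n-3 then b else if i = n-2 then x else if i = n-1 then y else g i)" for i
  have d: "a \<noteq> b" "b \<noteq> x" "b \<noteq> y" using edge_ne[OF sg] ab bx bY by auto
  have aL: "a \<notin> L" using L(1) edge_ne[OF sg] unfolding nb_def by auto
  have inV: "a \<in> V" "b \<in> V" "x \<in> V" "y \<in> V" using edge_V[OF sg] ab bx bY by auto
  have gi: "\<And>i. i \<in> {1..n-4} \<Longrightarrow> f i = g i \<and> g i \<in> L" using g n5 unfolding f_def bij_betw_def by auto
  have f0: "f 0 = a" "f (n-3) = b" "f (n-2) = x" "f (n-1) = y" using n5 unfolding f_def by auto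
  have cases: "\<And>i. i < n \<Longrightarrow> i = 0 \<or> i = n-3 \<or> i = n-2 \<or> i = n-1 \<or> i \<in> {1..n-4}" by auto
  have key: "\<And>i. i < n \<Longrightarrow> (i = 0 \<and> f i = a) \<or> (i = n-3 \<and> f i = b) \<or> (i = n-2 \<and> f i = x)
     \<or> (i = n-1 \<and> f i = y) \<or> (i \<in> {1..n-4} \<and> f i = g i \<and> g i \<in> L)"
  proof -
    fix i assume "i < n"
    from cases[OF this] show "?thesis i"
    proof (elim disjE)
      assume "i \<in> {1..n-4}" then show ?thesis using gi by blast
    qed (use f0 in auto)
  qed
  have gI: "inj_on g {1..n-4}" using g bij_betw_def by blast
  have fI: "inj_on f {1..n-4}" using gI gi by (metis inj_on_cong)
  have key': "\<And>i. i \<in> {0..<n} \<Longrightarrow> (i = 0 \<and> f i = a) \<or> (i = n-3 \<and> f i = b) \<or> (i = n-2 \<and> f i = x)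
     \<or> (i = n-1 \<and> f i = y) \<or> (i \<in> {1..n-4} \<and> f i \<in> L)"
  proof -
    fix i assume "i \<in> {0..<n}"
    then have "i < n" by simp
    from key[OF this] show "?thesis i" by (elim disjE) auto
  qed
  have "inj_on f {0..<n}"
    by (rule inj5[OF key' fI]) (use d xy aL L(3-5) n5 in auto)
  moreover have "f ` {0..<n} \<subseteq> V"
  proof
    fix v assume "v \<in> f ` {0..<n}"
    then obtain i where "i < n" "v = f i" by auto
    then show "v \<in> V" using cases[of i] gi[of i] f0 inV L(1) unfolding nb_def by auto
  qed
  moreover have "\<forall>e\<in>T2_edges n. f ` e \<in> E"
  proof
    fix e assume "e \<in> T2_edges n"
    then consider i where "e = {0,i}" "1 \<le> i" "i \<le> n-3" | "e = {n-3,n-2}" | "e = {n-3,n-1}"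
      unfolding T2_edges_def by auto
    then show "f ` e \<in> E"
    proof cases
      case (1 i)
      then have "i = n-3 \<or> i \<in> {1..n-4}" by auto
      then show ?thesis using 1 f0 gi[of i] ab L(1) unfolding nb_def by auto
    qed (use f0 bx bY in auto)
  qed
  ultimately have "contains_graph V E (T2_vertices n) (T2_edges n)"
    unfolding contains_graph_def T2_vertices_def by blast
  with nc show False by blast
qed

lemma two_elems:
  assumes "2 \<le> card A" obtains x y where "x \<in> A" "y \<in> A" "x \<noteq> y"
proof -
  obtain T where "T \<subseteq> A" "card T = 2" using obtain_subset_with_card_n[OF assms] by metis
  then show ?thesis using that card_2_iff by (metis insert_subset)
qed

lemma one_elem:
  assumes "1 \<le> card A" obtains x where "x \<in> A"
  using assms by (metis all_not_in_conv card.empty not_one_le_zero)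

lemma card_diff_ge: "finite B \<Longrightarrow> card B \<le> m \<Longrightarrow> card A - m \<le> card (A - B)"
  using diff_card_le_card_Diff[of B A] by linarith

lemma card3: "card {b,x,y::nat} \<le> 3"
  by (simp add: card_insert_if)

lemma card2: "card {b,x::nat} \<le> 2"
  by (simp add: card_insert_if)

lemma nb_sym: "simple_graph V E \<Longrightarrow> u \<in> nb V E v \<Longrightarrow> v \<in> nb V E u"
  unfolding nb_def using edge_V by (metis (no_types, lifting) insert_commute mem_Collect_eq)

lemma nb_E: "u \<in> nb V E v \<Longrightarrow> {v,u} \<in> E"
  unfolding nb_def by auto

lemma nb_V: "u \<in> nb V E v \<Longrightarrow> u \<in> V"
  unfolding nb_def by auto

lemma nb_irr: "simple_graph V E \<Longrightarrow> u \<in> nb V E v \<Longrightarrow> u \<noteq> v"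
  using edge_ne nb_E by metis

lemma L1:
  assumes n5: "n \<ge> 5" and sg: "simple_graph V E" and fV: "finite V"
    and nc: "\<not> contains_graph V E (T2_vertices n) (T2_edges n)"
    and da: "card (nb V E a) \<ge> n - 1" and b: "b \<in> nb V E a"
  shows "card (nb V E b) \<le> 2"
proof (rule ccontr)
  assume "\<not> ?thesis"
  then have "2 \<le> card (nb V E b - {a})" using card_diff_ge[of "{a}" 1 "nb V E b"] by simp
  then obtain x y where xy: "x \<in> nb V E b - {a}" "y \<in> nb V E b - {a}" "x \<noteq> y" by (rule two_elems)
  have "n - 4 \<le> card (nb V E a - {b,x,y})"
    using card_diff_ge[of "{b,x,y}" 3 "nb V E a", OF _ card3] da by simp
  then obtain L where L: "L \<subseteq> nb V E a - {b,x,y}" "card L = n - 4"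
    using obtain_subset_with_card_n by metis
  show False
    by (rule noT[of n V E a b x y L, OF n5 sg nc nb_E[OF b] nb_E nb_E]) (use xy L in auto)
qed

lemma L1':
  assumes n5: "n = 5" and sg: "simple_graph V E" and fV: "finite V"
    and nc: "\<not> contains_graph V E (T2_vertices n) (T2_edges n)"
    and da: "card (nb V E a) \<ge> 4" and b: "b \<in> nb V E a"
  shows "card (nb V E b) \<le> 1"
proof (rule ccontr)
  assume "\<not> ?thesis"
  then have "1 \<le> card (nb V E b - {a})" using card_diff_ge[of "{a}" 1 "nb V E b"] by simp
  then obtain z where z: "z \<in> nb V E b - {a}" by (rule one_elem)
  have "2 \<le> card (nb V E a - {b,z})"
    using card_diff_ge[of "{b,z}" 2 "nb V E a", OF _ card2] da by simp
  then obtain x y where xy: "x \<in> nb V E a - {b,z}" "y \<in> nb V E a - {b,z}" "x \<noteq> y" by (rule two_elems)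
  have ba: "{b,a} \<in> E" using nb_E[OF b] by (simp add: insert_commute)
  show False
    by (rule noT[of n V E b a x y "{z}", OF _ sg nc ba nb_E nb_E]) (use xy z n5 nb_irr[OF sg] in auto)
qed

lemma L2:
  assumes n5: "n \<ge> 5" and sg: "simple_graph V E" and fV: "finite V"
    and nc: "\<not> contains_graph V E (T2_vertices n) (T2_edges n)"
    and da: "card (nb V E a) = n - 2" and b: "b \<in> nb V E a" and db: "card (nb V E b) \<ge> 3"
    and z: "z \<in> nb V E b" "z \<noteq> a" "z \<notin> nb V E a"
  shows False
proof -
  have "1 \<le> card (nb V E b - {a,z})" using card_diff_ge[of "{a,z}" 2 "nb V E b", OF _ card2] db by simp
  then obtain y where y: "y \<in> nb V E b - {a,z}" by (rule one_elem)
  have "n - 4 \<le> card (nb V E a - {b,y})"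
    using card_diff_ge[of "{b,y}" 2 "nb V E a", OF _ card2] da by simp
  then obtain L where L: "L \<subseteq> nb V E a - {b,y}" "card L = n - 4"
    using obtain_subset_with_card_n by metis
  show False
    by (rule noT[of n V E a b z y L, OF n5 sg nc nb_E[OF b] nb_E nb_E]) (use y z L in auto)
qed

lemma ar1: fixes n c :: nat assumes "n \<ge> 5" "n - 1 \<le> c" shows "c*(n-3) \<le> (n-2)*(c-1)"
proof -
  define m where "m = n - 5"
  define t where "t = c - (n-1)"
  have "n = m + 5" "c = m + 4 + t" using assms unfolding m_def t_def by auto
  then show ?thesis by (simp add: algebra_simps)
qed
lemma ar2: fixes n c :: nat assumes "n \<ge> 5" "n - 1 \<le> c" shows "(n-2) + 2 + (n-3)*(n-3) + (n-2)*(c-(n-1)) \<le> (n-2)*(c-1)"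
proof -
  define m where "m = n - 5"
  define t where "t = c - (n-1)"
  have "n = m + 5" "c = m + 4 + t" using assms unfolding m_def t_def by auto
  then show ?thesis by (simp add: algebra_simps)
qed
lemma ar3: fixes n c :: nat assumes "n \<ge> 5" "1 \<le> c" shows "(n-2)*(c-1) + (n-2)*(n-1) = (n-2)*(c + (n-1) - 1)"
proof -
  define m where "m = n - 5"
  define t where "t = c - 1"
  have "n = m + 5" "c = t + 1" using assms unfolding m_def t_def by auto
  then show ?thesis by (simp add: algebra_simps)
qed

lemma nb_card_edges:
  assumes sg: "simple_graph V E" and v: "v \<in> V"
  shows "card (nb V E v) = card {e\<in>E. v \<in> e}"
proof (rule bij_betw_same_card)
  show "bij_betw (\<lambda>u. {v,u}) (nb V E v) {e\<in>E. v \<in> e}"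
    unfolding bij_betw_def
  proof
    show "inj_on (\<lambda>u. {v, u}) (nb V E v)"
      by (rule inj_onI) (metis doubleton_eq_iff)
    show "(\<lambda>u. {v, u}) ` nb V E v = {e \<in> E. v \<in> e}"
    proof
      show "(\<lambda>u. {v, u}) ` nb V E v \<subseteq> {e \<in> E. v \<in> e}" unfolding nb_def by auto
      show "{e \<in> E. v \<in> e} \<subseteq> (\<lambda>u. {v, u}) ` nb V E v"
      proof
        fix e assume e: "e \<in> {e \<in> E. v \<in> e}"
        then have "card e = 2" "e \<subseteq> V" using sg unfolding simple_graph_def by auto
        then obtain x y where xy: "e = {x,y}" "x \<noteq> y" using card_2_iff by metis
        then have "\<exists>u. e = {v,u}" using e by auto
        then obtain u where u: "e = {v,u}" by blast
        then have "u \<in> nb V E v" using e \<open>e \<subseteq> V\<close> unfolding nb_def by auto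
        then show "e \<in> (\<lambda>u. {v, u}) ` nb V E v" using u by blast
      qed
    qed
  qed
qed

lemma handshake:
  assumes sg: "simple_graph V E"
  shows "(\<Sum>v\<in>V. card (nb V E v)) = 2 * card E"
proof -
  have fV: "finite V" using sg simple_graph_def by blast
  have fE: "finite E"
    by (rule finite_subset[of E "Pow V"]) (use sg fV in \<open>auto simp: simple_graph_def\<close>)
  have "(\<Sum>v\<in>V. card (nb V E v)) = (\<Sum>v\<in>V. card {e\<in>E. v \<in> e})"
    using nb_card_edges[OF sg] by simp
  also have "\<dots> = (\<Sum>v\<in>V. \<Sum>e\<in>E. of_bool (v \<in> e))"
    using fE by (simp add: Int_def conj_commute)
  also have "\<dots> = (\<Sum>e\<in>E. \<Sum>v\<in>V. of_bool (v \<in> e))"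
    by (rule sum.swap)
  also have "\<dots> = (\<Sum>e\<in>E. card e)"
  proof (rule sum.cong)
    fix e assume "e \<in> E"
    then have "e \<subseteq> V" using sg simple_graph_def by blast
    then have "V \<inter> {x. x \<in> e} = e" by auto
    then show "(\<Sum>v\<in>V. of_bool (v \<in> e)) = card e" using fV by simp
  qed simp
  also have "\<dots> = (\<Sum>e\<in>E. 2)"
    using sg unfolding simple_graph_def by simp
  finally show ?thesis by simp
qed


lemma nb_sub: "nb V E v \<subseteq> V - {v}" if "simple_graph V E" for V E v
  using nb_irr[OF that] nb_V by blast

lemma caseA:
  assumes n5: "n \<ge> 5" and sg: "simple_graph V E" and fV: "finite V"
    and nc: "\<not> contains_graph V E (T2_vertices n) (T2_edges n)"
    and ex: "\<exists>a\<in>V. card (nb V E a) \<ge> n - 1"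
  shows "(\<Sum>v\<in>V. card (nb V E v)) \<le> (n-2) * (card V - 1)"
proof -
  define d where "d v = card (nb V E v)" for v
  define B where "B = {v\<in>V. d v \<ge> n - 1}"
  have BV: "B \<subseteq> V" unfolding B_def by auto
  have fB: "finite B" using BV fV finite_subset by blast
  have Bne: "B \<noteq> {}" using ex unfolding B_def d_def by auto
  have nbB: "d u \<le> 2 \<and> (n = 5 \<longrightarrow> d u \<le> 1)" if uV: "u \<in> V" and une: "nb V E u \<inter> B \<noteq> {}" for u
  proof -
    obtain a where a: "a \<in> nb V E u" "a \<in> B" using une by blast
    have ua: "u \<in> nb V E a" using nb_sym[OF sg a(1)] .
    have da: "card (nb V E a) \<ge> n - 1" using a(2) unfolding B_def d_def by auto
    have "d u \<le> 2" unfolding d_def using L1[OF n5 sg fV nc da ua] .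
    moreover have "n = 5 \<longrightarrow> d u \<le> 1"
    proof
      assume n: "n = 5"
      have "card (nb V E a) \<ge> 4" using da n by simp
      from L1'[OF n sg fV nc this ua] show "d u \<le> 1" unfolding d_def .
    qed
    ultimately show ?thesis by blast
  qed
  have Bind: "nb V E u \<inter> B = {}" if "u \<in> B" for u
  proof (rule ccontr)
    assume "nb V E u \<inter> B \<noteq> {}"
    from nbB[OF _ this] that n5 show False unfolding B_def by auto
  qed
  have swap: "(\<Sum>v\<in>B. d v) = (\<Sum>u\<in>V. card (nb V E u \<inter> B))"
  proof -
    have "(\<Sum>v\<in>B. d v) = (\<Sum>v\<in>B. \<Sum>u\<in>V. of_bool (u \<in> nb V E v))"
    proof (rule sum.cong)
      fix v assume "v \<in> B"
      have "V \<inter> {u. u \<in> nb V E v} = nb V E v" using nb_V by blast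
      then show "d v = (\<Sum>u\<in>V. of_bool (u \<in> nb V E v))" unfolding d_def using fV by simp
    qed simp
    also have "\<dots> = (\<Sum>u\<in>V. \<Sum>v\<in>B. of_bool (u \<in> nb V E v))" by (rule sum.swap)
    also have "\<dots> = (\<Sum>u\<in>V. card (nb V E u \<inter> B))"
    proof (rule sum.cong)
      fix u assume "u \<in> V"
      have "B \<inter> {v. u \<in> nb V E v} = nb V E u \<inter> B" using nb_sym[OF sg] by blast
      then show "(\<Sum>v\<in>B. of_bool (u \<in> nb V E v)) = card (nb V E u \<inter> B)" using fB by simp
    qed simp
    finally show ?thesis .
  qed
  have "(\<Sum>u\<in>V. card (nb V E u \<inter> B)) = (\<Sum>u\<in>V-B. card (nb V E u \<inter> B)) + (\<Sum>u\<in>B. card (nb V E u \<inter> B))"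
    by (rule sum.subset_diff[OF BV fV])
  also have "(\<Sum>u\<in>B. card (nb V E u \<inter> B)) = 0" using Bind by simp
  finally have s1: "(\<Sum>v\<in>B. d v) = (\<Sum>u\<in>V-B. card (nb V E u \<inter> B))" using swap by simp
  have "(\<Sum>v\<in>V. d v) = (\<Sum>v\<in>V-B. d v) + (\<Sum>v\<in>B. d v)"
    by (rule sum.subset_diff[OF BV fV])
  also have "\<dots> = (\<Sum>u\<in>V-B. d u + card (nb V E u \<inter> B))" using s1 by (simp add: sum.distrib)
  also have "\<dots> \<le> (\<Sum>u\<in>V-B. n - 2)"
  proof (rule sum_mono)
    fix u assume u: "u \<in> V - B"
    then have du: "d u \<le> n - 2" unfolding B_def by auto
    show "d u + card (nb V E u \<inter> B) \<le> n - 2"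
    proof (cases "nb V E u \<inter> B = {}")
      case True then show ?thesis using du by simp
    next
      case False
      have "card (nb V E u \<inter> B) \<le> d u" unfolding d_def
        by (rule card_mono) (use nb_fin[OF fV] in auto)
      moreover have "d u \<le> 2 \<and> (n = 5 \<longrightarrow> d u \<le> 1)" using nbB[OF _ False] u by auto
      ultimately show ?thesis using n5 by (cases "n = 5") auto
    qed
  qed
  also have "\<dots> = (n-2) * card (V - B)" by simp
  also have "\<dots> \<le> (n-2) * (card V - 1)"
  proof -
    have "card B \<ge> 1" using Bne fB by (simp add: Suc_leI card_gt_0_iff)
    then have "card (V - B) \<le> card V - 1" using card_Diff_subset[OF fB BV] by simp
    then show ?thesis by simp
  qed
  finally show ?thesis unfolding d_def .
qed


lemma caseB1:
  assumes n5: "n \<ge> 5" and sg: "simple_graph V E" and fV: "finite V"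
    and dl: "\<forall>v\<in>V. card (nb V E v) \<le> n - 3"
  shows "(\<Sum>v\<in>V. card (nb V E v)) \<le> (n-2) * (card V - 1)"
proof (cases "card V \<le> n - 2")
  case True
  have "(\<Sum>v\<in>V. card (nb V E v)) \<le> card V * (card V - 1)"
  proof -
    have "card (nb V E v) \<le> card V - 1" if "v \<in> V" for v
    proof -
      have "card (nb V E v) \<le> card (V - {v})" by (rule card_mono) (use fV nb_sub[OF sg] in auto)
      then show ?thesis using that fV by simp
    qed
    then show ?thesis using sum_bounded_above[of V "\<lambda>v. card (nb V E v)" "card V - 1"] by simp
  qed
  also have "\<dots> \<le> (n-2) * (card V - 1)" using True by simp
  finally show ?thesis .
next
  case False
  have "(\<Sum>v\<in>V. card (nb V E v)) \<le> card V * (n - 3)"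
    using sum_bounded_above[of V "\<lambda>v. card (nb V E v)" "n - 3"] dl by simp
  also have "\<dots> \<le> (n-2) * (card V - 1)" using ar1[OF n5] False by simp
  finally show ?thesis .
qed

lemma caseB2:
  assumes n5: "n \<ge> 5" and sg: "simple_graph V E" and fV: "finite V"
    and nc: "\<not> contains_graph V E (T2_vertices n) (T2_edges n)"
    and dl: "\<forall>v\<in>V. card (nb V E v) \<le> n - 2"
    and a: "a \<in> V" "card (nb V E a) = n - 2"
    and S: "S = insert a (nb V E a)" and c: "c \<in> S" and z: "z \<in> nb V E c" "z \<notin> S"
  shows "(\<Sum>v\<in>V. card (nb V E v)) \<le> (n-2) * (card V - 1)"
proof -
  define d where "d v = card (nb V E v)" for v
  have SV: "S \<subseteq> V" using S a nb_V by blast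
  have fS: "finite S" using SV fV finite_subset by blast
  have aS: "a \<notin> nb V E a" using nb_irr[OF sg] by blast
  have cS: "card S = n - 1" using S aS nb_fin[OF fV] a(2) n5 by simp
  have ca: "c \<noteq> a" using z S by auto
  have cn: "c \<in> nb V E a" using c ca S by auto
  have za: "z \<noteq> a" "z \<notin> nb V E a" using z S by auto
  have dc: "d c \<le> 2"
  proof (rule ccontr)
    assume "\<not> d c \<le> 2"
    then have "card (nb V E c) \<ge> 3" unfolding d_def by simp
    from L2[OF n5 sg fV nc a(2) cn this z(1) za] show False .
  qed
  have du: "d u \<le> n - 3" if u: "u \<in> S - {a} - {c}" for u
  proof (cases "d u \<ge> 3")
    case False then show ?thesis using n5 by simp
  next
    case True
    have un: "u \<in> nb V E a" using u S by auto
    have sub: "nb V E u \<subseteq> S - {u} - {c}"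
    proof
      fix w assume w: "w \<in> nb V E u"
      have "w \<in> S"
      proof (rule ccontr)
        assume "w \<notin> S"
        then have "w \<noteq> a" "w \<notin> nb V E a" using S by auto
        from L2[OF n5 sg fV nc a(2) un True[unfolded d_def] w this] show False .
      qed
      moreover have "w \<noteq> u" using nb_irr[OF sg w] .
      moreover have "w \<noteq> c"
      proof
        assume wc: "w = c"
        then have uc: "u \<in> nb V E c" using nb_sym[OF sg w] by simp
        have "{a, z, u} \<subseteq> nb V E c" using uc z(1) nb_sym[OF sg cn] by auto
        moreover have "z \<noteq> u" using u z(2) by auto
        then have "card {a, z, u} = 3" using za u by auto
        ultimately have "3 \<le> d c" unfolding d_def using card_mono[OF nb_fin[OF fV]] by metis
        with dc show False by simp
      qed
      ultimately show "w \<in> S - {u} - {c}" by blast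
    qed
    have "d u \<le> card (S - {u} - {c})" unfolding d_def by (rule card_mono) (use fS sub in auto)
    also have "\<dots> = n - 3" using cS u c fS by (simp add: card_Diff_singleton_if)
    finally show ?thesis .
  qed
  have "(\<Sum>v\<in>V. d v) = (\<Sum>v\<in>V-S. d v) + (\<Sum>v\<in>S. d v)"
    by (rule sum.subset_diff[OF SV fV])
  also have "(\<Sum>v\<in>S. d v) = d a + (d c + (\<Sum>v\<in>S - {a} - {c}. d v))"
    using sum.remove[OF fS, of a d] sum.remove[of "S - {a}" c d] fS c ca S by auto
  also have "(\<Sum>v\<in>S - {a} - {c}. d v) \<le> (n-3) * (n-3)"
  proof -
    have "card (S - {a} - {c}) = n - 3" using cS c ca fS aS S by (simp add: card_Diff_singleton)
    then show ?thesis using sum_bounded_above[of "S - {a} - {c}" d "n-3"] du by simp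
  qed
  also have "(\<Sum>v\<in>V-S. d v) \<le> (n-2) * (card V - (n-1))"
  proof -
    have "card (V - S) = card V - (n-1)" using card_Diff_subset[OF fS SV] cS by simp
    then show ?thesis using sum_bounded_above[of "V - S" d "n-2"] dl unfolding d_def by (simp add: mult.commute)
  qed
  finally have "(\<Sum>v\<in>V. d v) \<le> (n-2) + 2 + (n-3)*(n-3) + (n-2)*(card V - (n-1))"
    using dc a(2) unfolding d_def by simp
  also have "\<dots> \<le> (n-2) * (card V - 1)"
  proof (rule ar2[OF n5])
    show "n - 1 \<le> card V" using card_mono[OF fV SV] cS by simp
  qed
  finally show ?thesis unfolding d_def .
qed


lemma contains_mono:
  "contains_graph V' E' VL EL \<Longrightarrow> V' \<subseteq> V \<Longrightarrow> E' \<subseteq> E \<Longrightarrow> contains_graph V E VL EL"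
proof -
  assume c: "contains_graph V' E' VL EL" and s: "V' \<subseteq> V" "E' \<subseteq> E"
  from c obtain f where f: "inj_on f VL" "f ` VL \<subseteq> V'" "\<forall>e\<in>EL. f ` e \<in> E'"
    unfolding contains_graph_def by blast
  then have "inj_on f VL \<and> f ` VL \<subseteq> V \<and> (\<forall>e\<in>EL. f ` e \<in> E)" using s by blast
  then show ?thesis unfolding contains_graph_def by blast
qed

lemma UB:
  assumes n5: "n \<ge> 5"
  shows "finite V \<Longrightarrow> simple_graph V E \<Longrightarrow> \<not> contains_graph V E (T2_vertices n) (T2_edges n)
    \<Longrightarrow> \<not> (n-1) dvd card V \<Longrightarrow> (\<Sum>v\<in>V. card (nb V E v)) \<le> (n-2) * (card V - 1)"
proof (induction "card V" arbitrary: V E rule: less_induct)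
  case less
  note fV = less.prems(1) and sg = less.prems(2) and nc = less.prems(3) and nd = less.prems(4)
  show ?case
  proof (cases "\<exists>a\<in>V. card (nb V E a) \<ge> n - 1")
    case True
    then show ?thesis using caseA[OF n5 sg fV nc] by blast
  next
    case False
    then have dl: "\<forall>v\<in>V. card (nb V E v) \<le> n - 2" by auto
    show ?thesis
    proof (cases "\<exists>a\<in>V. card (nb V E a) = n - 2")
      case False
      then have "\<forall>v\<in>V. card (nb V E v) \<le> n - 3" using dl by fastforce
      then show ?thesis using caseB1[OF n5 sg fV] by blast
    next
      case True
      then obtain a where a: "a \<in> V" "card (nb V E a) = n - 2" by blast
      define S where "S = insert a (nb V E a)"
      show ?thesis
      proof (cases "\<exists>c\<in>S. \<exists>z. z \<in> nb V E c \<and> z \<notin> S")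
        case True
        then obtain c z where "c \<in> S" "z \<in> nb V E c" "z \<notin> S" by blast
        from caseB2[OF n5 sg fV nc dl a S_def this] show ?thesis .
      next
        case False
        then have cl: "\<forall>c\<in>S. nb V E c \<subseteq> S" by blast
        have SV: "S \<subseteq> V" using S_def a nb_V by blast
        have fS: "finite S" using SV fV finite_subset by blast
        have aS: "a \<notin> nb V E a" using nb_irr[OF sg] by blast
        have cS: "card S = n - 1" using S_def aS nb_fin[OF fV] a(2) n5 by simp
        define V' where "V' = V - S"
        define E' where "E' = {e\<in>E. e \<subseteq> V'}"
        have cV': "card V' = card V - (n-1)" unfolding V'_def using card_Diff_subset[OF fS SV] cS by simp
        have cVge: "card V \<ge> n - 1" using card_mono[OF fV SV] cS by simp
        have lt: "card V' < card V" using cV' cVge n5 by simp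
        have fV': "finite V'" unfolding V'_def using fV by simp
        have sg': "simple_graph V' E'" using sg fV' unfolding simple_graph_def E'_def by auto
        have nc': "\<not> contains_graph V' E' (T2_vertices n) (T2_edges n)"
        proof
          assume "contains_graph V' E' (T2_vertices n) (T2_edges n)"
          then have "contains_graph V E (T2_vertices n) (T2_edges n)"
            by (rule contains_mono) (auto simp: V'_def E'_def)
          with nc show False by blast
        qed
        have nd': "\<not> (n-1) dvd card V'"
        proof
          assume "(n-1) dvd card V'"
          then have "(n-1) dvd card V' + (n-1)" by simp
          moreover have "card V' + (n-1) = card V" using cV' cVge by simp
          ultimately show False using nd by metis
        qed
        have IH: "(\<Sum>v\<in>V'. card (nb V' E' v)) \<le> (n-2) * (card V' - 1)"
          using less.hyps[OF lt fV' sg' nc' nd'] .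
        have nbeq: "nb V' E' v = nb V E v" if v: "v \<in> V'" for v
        proof
          show "nb V' E' v \<subseteq> nb V E v" unfolding nb_def E'_def V'_def by auto
          show "nb V E v \<subseteq> nb V' E' v"
          proof
            fix u assume u: "u \<in> nb V E v"
            have "u \<notin> S"
            proof
              assume "u \<in> S"
              then have "v \<in> S" using cl nb_sym[OF sg u] by blast
              with v show False unfolding V'_def by blast
            qed
            then have "u \<in> V'" using nb_V[OF u] unfolding V'_def by blast
            then show "u \<in> nb V' E' v" using u v unfolding nb_def E'_def by auto
          qed
        qed
        have "(\<Sum>v\<in>V. card (nb V E v)) = (\<Sum>v\<in>V'. card (nb V E v)) + (\<Sum>v\<in>S. card (nb V E v))"
          unfolding V'_def by (rule sum.subset_diff[OF SV fV])
        also have "(\<Sum>v\<in>V'. card (nb V E v)) = (\<Sum>v\<in>V'. card (nb V' E' v))"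
          using nbeq by simp
        also have "(\<Sum>v\<in>S. card (nb V E v)) \<le> (n-2) * (n-1)"
          using sum_bounded_above[of S "\<lambda>v. card (nb V E v)" "n-2"] dl SV cS by (simp add: mult.commute subset_iff)
        finally have "(\<Sum>v\<in>V. card (nb V E v)) \<le> (n-2) * (card V' - 1) + (n-2) * (n-1)"
          using IH by simp
        also have "\<dots> = (n-2) * (card V' + (n-1) - 1)"
        proof (rule ar3[OF n5])
          show "1 \<le> card V'" using nd' by (cases "card V' = 0") auto
        qed
        also have "card V' + (n-1) = card V" using cV' cVge by simp
        finally show ?thesis .
      qed
    qed
  qed
qed


definition Ep :: "nat \<Rightarrow> nat \<Rightarrow> nat set set" where
  "Ep m p = {{x,y} | x y. x < y \<and> y < p \<and> x div m = y div m}"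

lemma Ep_sub: "Ep m p \<subseteq> Pow {0..<p}"
  unfolding Ep_def by auto

lemma Ep_fin: "finite (Ep m p)"
  using finite_subset[OF Ep_sub] by auto

lemma Ep_simple: "simple_graph {0..<p} (Ep m p)"
  unfolding simple_graph_def Ep_def by auto

lemma same_block: fixes m p x :: nat assumes "m > 0" "x < p"
  shows "x div m = p div m \<longleftrightarrow> p - p mod m \<le> x"
proof
  assume "x div m = p div m"
  then show "p - p mod m \<le> x" by (metis div_mult_mod_eq le_add1 minus_mod_eq_div_mult [symmetric] mult.commute)
next
  assume h: "p - p mod m \<le> x"
  have "p - p mod m = m * (p div m)" by (simp add: minus_mod_eq_mult_div)
  with h have "p div m \<le> x div m"
    by (metis assms(1) div_le_mono div_mult_self1_is_m)
  moreover have "x div m \<le> p div m" using assms(2) by (simp add: div_le_mono)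
  ultimately show "x div m = p div m" by simp
qed

lemma Ep_Suc: assumes "m > 0"
  shows "Ep m (Suc p) = Ep m p \<union> (\<lambda>x. {x,p}) ` {p - p mod m..<p}"
proof
  show "Ep m (Suc p) \<subseteq> Ep m p \<union> (\<lambda>x. {x,p}) ` {p - p mod m..<p}"
  proof
    fix e assume "e \<in> Ep m (Suc p)"
    then obtain x y where e: "e = {x,y}" "x < y" "y < Suc p" "x div m = y div m" unfolding Ep_def by blast
    show "e \<in> Ep m p \<union> (\<lambda>x. {x,p}) ` {p - p mod m..<p}"
    proof (cases "y = p")
      case True
      then have "x \<in> {p - p mod m..<p}" using same_block[OF assms, of x p] e by auto
      then show ?thesis using e True by blast
    next
      case False
      then have "e \<in> Ep m p" using e unfolding Ep_def by auto
      then show ?thesis by blast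
    qed
  qed
  show "Ep m p \<union> (\<lambda>x. {x,p}) ` {p - p mod m..<p} \<subseteq> Ep m (Suc p)"
  proof
    fix e assume "e \<in> Ep m p \<union> (\<lambda>x. {x,p}) ` {p - p mod m..<p}"
    then show "e \<in> Ep m (Suc p)"
    proof
      assume "e \<in> Ep m p" then show ?thesis unfolding Ep_def by fastforce
    next
      assume "e \<in> (\<lambda>x. {x,p}) ` {p - p mod m..<p}"
      then obtain x where x: "e = {x,p}" "x \<in> {p - p mod m..<p}" by blast
      then have "x div m = p div m" using same_block[OF assms, of x p] by auto
      then show ?thesis using x unfolding Ep_def by auto
    qed
  qed
qed

lemma Ep_card_Suc: assumes "m > 0"
  shows "card (Ep m (Suc p)) = card (Ep m p) + p mod m"
proof -
  have disj: "Ep m p \<inter> (\<lambda>x. {x,p}) ` {p - p mod m..<p} = {}"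
    unfolding Ep_def by (auto simp: doubleton_eq_iff)
  have inj: "inj_on (\<lambda>x. {x,p}) {p - p mod m..<p}"
    by (rule inj_onI) (auto simp: doubleton_eq_iff)
  have "card ((\<lambda>x. {x,p}) ` {p - p mod m..<p}) = p mod m"
    using card_image[OF inj] by simp
  then show ?thesis
    using Ep_Suc[OF assms] card_Un_disjoint[OF Ep_fin _ disj] by simp
qed

lemma Ep_card: assumes "m > 0"
  shows "2 * int (card (Ep m p)) = (int m - 1) * (int p - int (p mod m)) + int (p mod m) * (int (p mod m) - 1)"
proof (induction p)
  case 0
  then show ?case by (simp add: Ep_def)
next
  case (Suc p)
  have c: "card (Ep m (Suc p)) = card (Ep m p) + p mod m" by (rule Ep_card_Suc[OF assms])
  show ?case
  proof (cases "Suc (p mod m) = m")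
    case True
    then have z: "Suc p mod m = 0" by (simp add: mod_Suc)
    define r where "r = p mod m"
    have mr: "int m = int r + 1" using True r_def by simp
    have ih: "2 * int (card (Ep m p)) = (int m - 1) * (int p - int r) + int r * (int r - 1)"
      using Suc.IH r_def by simp
    have c': "card (Ep m (Suc p)) = card (Ep m p) + r" using c r_def by simp
    show ?thesis unfolding z c' using ih unfolding mr by (simp add: algebra_simps)
  next
    case False
    then have "Suc p mod m = Suc (p mod m)" by (simp add: mod_Suc)
    then show ?thesis using Suc c by (simp add: algebra_simps)
  qed
qed


lemma Ep_edge_block: "{u,v} \<in> Ep m p \<Longrightarrow> u div m = v div m"
  unfolding Ep_def by (auto simp: doubleton_eq_iff)

lemma Ep_noT:
  assumes n5: "n \<ge> 5"
  shows "\<not> contains_graph {0..<p} (Ep (n-1) p) (T2_vertices n) (T2_edges n)"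
proof
  assume "contains_graph {0..<p} (Ep (n-1) p) (T2_vertices n) (T2_edges n)"
  then obtain f where f: "inj_on f {0..<n}" "\<forall>e\<in>T2_edges n. f ` e \<in> Ep (n-1) p"
    unfolding contains_graph_def T2_vertices_def by blast
  define m where "m = n - 1"
  have m0: "m > 0" using n5 m_def by simp
  have e0: "f 0 div m = f i div m" if "1 \<le> i" "i \<le> n-3" for i
  proof -
    have "{0,i} \<in> T2_edges n" unfolding T2_edges_def using that by blast
    then have "f ` {0,i} \<in> Ep (n-1) p" using f(2) by blast
    then have "{f 0, f i} \<in> Ep m p" unfolding m_def by simp
    then show ?thesis by (rule Ep_edge_block)
  qed
  have e1: "f (n-3) div m = f (n-2) div m" "f (n-3) div m = f (n-1) div m"
  proof -
    have "{n-3,n-2} \<in> T2_edges n" "{n-3,n-1} \<in> T2_edges n" unfolding T2_edges_def by auto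
    then have "f ` {n-3,n-2} \<in> Ep (n-1) p" "f ` {n-3,n-1} \<in> Ep (n-1) p" using f(2) by blast+
    then have "{f (n-3), f (n-2)} \<in> Ep m p" "{f (n-3), f (n-1)} \<in> Ep m p" unfolding m_def by simp_all
    then show "f (n-3) div m = f (n-2) div m" "f (n-3) div m = f (n-1) div m" using Ep_edge_block by blast+
  qed
  have all: "f i div m = f 0 div m" if "i < n" for i
  proof -
    have "i = 0 \<or> (1 \<le> i \<and> i \<le> n-3) \<or> i = n-2 \<or> i = n-1" using that by auto
    then show ?thesis
    proof (elim disjE)
      assume "1 \<le> i \<and> i \<le> n - 3" then show ?thesis using e0[of i] by simp
    next
      assume "i = n - 2" then show ?thesis using e1(1) e0[of "n-3"] n5 by simp
    next
      assume "i = n - 1" then show ?thesis using e1(2) e0[of "n-3"] n5 by simp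
    qed simp
  qed
  define c where "c = f 0 div m"
  have sub: "f ` {0..<n} \<subseteq> {c*m..<c*m+m}"
  proof
    fix v assume "v \<in> f ` {0..<n}"
    then obtain i where i: "i < n" "v = f i" by auto
    then have "v div m = c" using all[OF i(1)] c_def by simp
    then have eq: "c*m + v mod m = v" using div_mult_mod_eq[of v m] by simp
    have "v mod m < m" using m0 by simp
    with eq show "v \<in> {c*m..<c*m+m}" unfolding atLeastLessThan_iff by linarith
  qed
  have "n = card (f ` {0..<n})" using card_image[OF f(1)] by simp
  also have "\<dots> \<le> card {c*m..<c*m+m}" by (rule card_mono) (use sub in auto)
  also have "\<dots> = n - 1" using m_def by simp
  finally show False using n5 by simp
qed

theorem corollary3p1:
  fixes p n :: nat
  assumes "n \<ge> 5" and "p \<ge> n" and "\<not> (n - 1) dvd p"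
  shows "real (n - 2) * real p / 2 - (real n - 1)^2 / 8 \<le> real (ex p (T2_vertices n) (T2_edges n))
     \<and> real (ex p (T2_vertices n) (T2_edges n)) \<le> real (n - 2) * (real p - 1) / 2"
proof -
  define Sset where "Sset = {card E | E. simple_graph {0..<p} E \<and> \<not> contains_graph {0..<p} E (T2_vertices n) (T2_edges n)}"
  have exd: "ex p (T2_vertices n) (T2_edges n) = Max Sset" unfolding ex_def Sset_def by simp
  have fin: "finite Sset"
  proof (rule finite_subset)
    show "Sset \<subseteq> card ` Pow (Pow {0..<p})" unfolding Sset_def simple_graph_def by auto
  qed simp
  define m where "m = n - 1"
  have m0: "m > 0" using assms m_def by simp
  have EpS: "card (Ep m p) \<in> Sset" unfolding Sset_def m_def using Ep_simple Ep_noT[OF assms(1)] by blast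
  have ne: "Sset \<noteq> {}" using EpS by blast
  have upper: "real x \<le> real (n - 2) * (real p - 1) / 2" if xS: "x \<in> Sset" for x
  proof -
    obtain E where E: "x = card E" "simple_graph {0..<p} E" "\<not> contains_graph {0..<p} E (T2_vertices n) (T2_edges n)"
      using xS unfolding Sset_def by blast
    have "2 * card E = (\<Sum>v\<in>{0..<p}. card (nb {0..<p} E v))" using handshake[OF E(2)] by simp
    also have "\<dots> \<le> (n-2) * (card {0..<p} - 1)"
      by (rule UB[OF assms(1) _ E(2) E(3)]) (use assms(3) in auto)
    finally have "2 * card E \<le> (n-2) * (p - 1)" by simp
    then have "real (2 * card E) \<le> real ((n-2) * (p - 1))" by linarith
    then have "2 * real (card E) \<le> real (n-2) * (real p - 1)" using assms by (simp add: of_nat_diff)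
    then show ?thesis using E(1) by simp
  qed
  have lower: "real (n - 2) * real p / 2 - (real n - 1)^2 / 8 \<le> real (card (Ep m p))"
  proof -
    define r where "r = p mod m"
    have h: "2 * int (card (Ep m p)) = (int m - 1) * (int p - int r) + int r * (int r - 1)"
      using Ep_card[OF m0] r_def by simp
    have h': "2 * real (card (Ep m p)) = (real m - 1) * (real p - real r) + real r * (real r - 1)"
    proof -
      have "real_of_int (2 * int (card (Ep m p))) = real_of_int ((int m - 1) * (int p - int r) + int r * (int r - 1))"
        using h by simp
      then show ?thesis by simp
    qed
    have sq: "0 \<le> (real m - 2 * real r)^2" by simp
    have nm: "real (n-2) = real m - 1" "real n - 1 = real m" using assms m_def by (auto simp: of_nat_diff)
    show ?thesis unfolding nm using h' sq by (simp add: power2_eq_square algebra_simps)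
  qed
  have "Max Sset \<in> Sset" using Max_in[OF fin ne] .
  then have u: "real (Max Sset) \<le> real (n - 2) * (real p - 1) / 2" by (rule upper)
  have "card (Ep m p) \<le> Max Sset" using Max_ge[OF fin EpS] .
  then have l: "real (card (Ep m p)) \<le> real (Max Sset)" by simp
  show ?thesis unfolding exd using u l lower by linarith
qed

end
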